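(* Let $\ast$ be a continuous $t$-norm and let $\{(X_n,M_n,\ast)\}_{n\in\mathbb N}$ be a sequence of nonempty compact non-Archimedean fuzzy metric spaces satisfying: (1) $\ast$ satisfies (TN1); (2) there exists a nondecreasing left-continuous function $C:(0,\infty)\to(0,1]$ with $0<C(s)\le\mathrm{diam}_s(X_n)$ for all $s>0$ and all $n\in\mathbb N$; (3) for every $t>0$ and $0<\varepsilon<1$ there is $N(\varepsilon,t)\in\mathbb N$ with $\mathrm{Cov}(X_n,\varepsilon,t)\le N(\varepsilon,t)$ for all $n$; (4) for every $t>0$ and $0<\varepsilon<1$, with $N=N(\varepsilon,t)$, there exist, for each $n$, a $(t,\varepsilon)$-net $\{x_i^n\}_{i=1}^N$ in $X_n$ such that for all $n,m\in\mathbb N$, all $s>t$ and all $i,j\in\{1,\dots,N\}$: if $M_n(x_i^n,x_j^n,s)<M_m(x_i^m,x_j^m,s)$ then $$\frac{M_n(x_i^n,x_j^n,s)}{M_m(x_i^m,x_j^m,s)\ast(1-\varepsilon)}\ge\frac{M_n(x_i^n,x_j^n,t)}{M_m(x_i^m,x_j^m,t)\ast(1-\varepsilon)}.$$ Then for every $t>0$ and $0<\varepsilon<1$ there is a subsequence $\{(X_{n_k},M_{n_k},\ast)\}_{k\in\mathbb N}$ with $M_{GH}(X_{n_j},X_{n_k},t)>(1-\varepsilon)\ast(1-\varepsilon)$ for all $j,k\in\mathbb N$.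
   Context: A continuous $t$-norm is a binary operation $\ast:[0,1]\times[0,1]\to[0,1]$ which is associative, commutative, continuous, satisfies $a\ast 1=a$ for all $a$, and is monotone ($a\ast b\le c\ast d$ whenever $a\le c$, $b\le d$). Property (TN1): $a-a\ast b\ge a\ast(1-b)$ for all $a,b\in[0,1]$. A fuzzy metric space $(X,M,\ast)$ consists of a set $X$, a continuous $t$-norm $\ast$ and a map $M:X\times X\times[0,\infty)\to[0,1]$ such that for all $x,y,z\in X$ and $t,s>0$: (KM1) $M(x,y,0)=0$; (KM2) $M(x,y,t)=1$ for all $t>0$ iff $x=y$; (KM3) $M(x,y,t)=M(y,x,t)$; (KM4) $M(x,y,t)\ast M(y,z,s)\le M(x,z,t+s)$; (KM5) $M(x,y,\cdot):[0,\infty)\to[0,1]$ is left continuous. It is non-Archimedean if moreover $M(x,z,\max\{t,s\})\ge M(x,y,t)\ast M(y,z,s)$ for all $x,y,z\in X$, $t,s>0$. The balls are $B(x,\varepsilon,t)=\{y: M(x,y,t)>1-\varepsilon\}$ ($0<\varepsilon<1$, $t>0$); they generate the topology, and "compact" refers to it. For nonempty compact $A,B\subseteq X$: $H_M(A,B,t)=\min\{\inf_{a\in A}\sup_{b\in B}M(a,b,t),\ \inf_{b\in B}\sup_{a\in A}M(a,b,t)\}$. A fuzzy metric on the disjoint union $X\sqcup Y$ is admissible if it restricts to the given fuzzy metrics on $X$ and $Y$; $M_{GH}(X,Y,t)=\sup\{H_M(X,Y,t): M$ admissible non-Archimedean fuzzy metric on $X\sqcup Y$ with $t$-norm $\ast\}$.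 A family $\{x_i\}_{i=1}^N$ in $X$ (repetitions allowed) is a $(t,\varepsilon)$-net if for each $x\in X$ there is $i$ with $M(x,x_i,t)>1-\varepsilon$. The cover number $\mathrm{Cov}(X,\varepsilon,t)$ is the minimal cardinality of a set $C\subseteq X$ with $X=\bigcup_{c\in C}B(c,\varepsilon,t)$. The $s$-diameter is $\mathrm{diam}_s(X)=\inf\{M(x,y,s): x,y\in X\}$. *)

theory Defs
  imports "HOL-Analysis.Analysis"
begin

text \<open>Continuous t-norm on [0,1], given as a real function (only its values on [0,1] matter).\<close>
definition cont_tnorm :: "(real \<Rightarrow> real \<Rightarrow> real) \<Rightarrow> bool" where
  "cont_tnorm T \<longleftrightarrow>
     (\<forall>a\<in>{0..1}. \<forall>b\<in>{0..1}. T a b \<in> {0..1}) \<and>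
     (\<forall>a\<in>{0..1}. \<forall>b\<in>{0..1}. \<forall>c\<in>{0..1}. T (T a b) c = T a (T b c)) \<and>
     (\<forall>a\<in>{0..1}. \<forall>b\<in>{0..1}. T a b = T b a) \<and>
     continuous_on ({0..1} \<times> {0..1}) (\<lambda>(a, b). T a b) \<and>
     (\<forall>a\<in>{0..1}. T a 1 = a) \<and>
     (\<forall>a\<in>{0..1}. \<forall>b\<in>{0..1}. \<forall>c\<in>{0..1}. \<forall>d\<in>{0..1}.
        a \<le> c \<longrightarrow> b \<le> d \<longrightarrow> T a b \<le> T c d)"

definition TN1 :: "(real \<Rightarrow> real \<Rightarrow> real) \<Rightarrow> bool" where
  "TN1 T \<longleftrightarrow> (\<forall>a\<in>{0..1}. \<forall>b\<in>{0..1}. a - T a b \<ge> T a (1 - b))"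

definition fuzzy_metric :: "'a set \<Rightarrow> ('a \<Rightarrow> 'a \<Rightarrow> real \<Rightarrow> real) \<Rightarrow> (real \<Rightarrow> real \<Rightarrow> real) \<Rightarrow> bool" where
  "fuzzy_metric X M T \<longleftrightarrow>
     cont_tnorm T \<and>
     (\<forall>x\<in>X. \<forall>y\<in>X. \<forall>t\<ge>0. M x y t \<in> {0..1}) \<and>
     (\<forall>x\<in>X. \<forall>y\<in>X. M x y 0 = 0) \<and>
     (\<forall>x\<in>X. \<forall>y\<in>X. (\<forall>t>0. M x y t = 1) \<longleftrightarrow> x = y) \<and>
     (\<forall>x\<in>X. \<forall>y\<in>X. \<forall>t>0. M x y t = M y x t) \<and>
     (\<forall>x\<in>X. \<forall>y\<in>X. \<forall>z\<in>X. \<forall>t>0. \<forall>s>0. T (M x y t) (M y z s) \<le> M x z (t + s)) \<and>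
     (\<forall>x\<in>X. \<forall>y\<in>X. \<forall>t>0. continuous (at_left t) (M x y))"

definition non_archimedean :: "'a set \<Rightarrow> ('a \<Rightarrow> 'a \<Rightarrow> real \<Rightarrow> real) \<Rightarrow> (real \<Rightarrow> real \<Rightarrow> real) \<Rightarrow> bool" where
  "non_archimedean X M T \<longleftrightarrow> fuzzy_metric X M T \<and>
     (\<forall>x\<in>X. \<forall>y\<in>X. \<forall>z\<in>X. \<forall>t>0. \<forall>s>0. T (M x y t) (M y z s) \<le> M x z (max t s))"

definition fball :: "'a set \<Rightarrow> ('a \<Rightarrow> 'a \<Rightarrow> real \<Rightarrow> real) \<Rightarrow> 'a \<Rightarrow> real \<Rightarrow> real \<Rightarrow> 'a set" where
  "fball X M x e t = {y\<in>X. M x y t > 1 - e}"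

definition fopen :: "'a set \<Rightarrow> ('a \<Rightarrow> 'a \<Rightarrow> real \<Rightarrow> real) \<Rightarrow> 'a set \<Rightarrow> bool" where
  "fopen X M U \<longleftrightarrow> U \<subseteq> X \<and>
     (\<forall>x\<in>U. \<exists>e t. 0 < e \<and> e < 1 \<and> 0 < t \<and> fball X M x e t \<subseteq> U)"

definition fuzzy_topology :: "'a set \<Rightarrow> ('a \<Rightarrow> 'a \<Rightarrow> real \<Rightarrow> real) \<Rightarrow> 'a topology" where
  "fuzzy_topology X M = topology (fopen X M)"

definition fcompact :: "'a set \<Rightarrow> ('a \<Rightarrow> 'a \<Rightarrow> real \<Rightarrow> real) \<Rightarrow> bool" where
  "fcompact X M \<longleftrightarrow>
     (\<forall>\<U>. (\<forall>U\<in>\<U>. fopen X M U) \<and> X \<subseteq> \<Union>\<U> \<longrightarrow> (\<exists>\<F>\<subseteq>\<U>. finite \<F> \<and> X \<subseteq> \<Union>\<F>))"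

definition hausdorff_fuzzy :: "('a \<Rightarrow> 'a \<Rightarrow> real \<Rightarrow> real) \<Rightarrow> 'a set \<Rightarrow> 'a set \<Rightarrow> real \<Rightarrow> real" where
  "hausdorff_fuzzy M A B t =
     min (Inf ((\<lambda>a. Sup ((\<lambda>b. M a b t) ` B)) ` A))
         (Inf ((\<lambda>b. Sup ((\<lambda>a. M a b t) ` A)) ` B))"

definition admissible :: "'a set \<Rightarrow> ('a \<Rightarrow> 'a \<Rightarrow> real \<Rightarrow> real) \<Rightarrow> 'b set \<Rightarrow> ('b \<Rightarrow> 'b \<Rightarrow> real \<Rightarrow> real)
     \<Rightarrow> (real \<Rightarrow> real \<Rightarrow> real) \<Rightarrow> ('a + 'b \<Rightarrow> 'a + 'b \<Rightarrow> real \<Rightarrow> real) \<Rightarrow> bool" where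
  "admissible X MX Y MY T M \<longleftrightarrow>
     non_archimedean (X <+> Y) M T \<and>
     (\<forall>x\<in>X. \<forall>y\<in>X. \<forall>t\<ge>0. M (Inl x) (Inl y) t = MX x y t) \<and>
     (\<forall>x\<in>Y. \<forall>y\<in>Y. \<forall>t\<ge>0. M (Inr x) (Inr y) t = MY x y t)"

definition M_GH :: "'a set \<Rightarrow> ('a \<Rightarrow> 'a \<Rightarrow> real \<Rightarrow> real) \<Rightarrow> 'b set \<Rightarrow> ('b \<Rightarrow> 'b \<Rightarrow> real \<Rightarrow> real)
     \<Rightarrow> (real \<Rightarrow> real \<Rightarrow> real) \<Rightarrow> real \<Rightarrow> real" where
  "M_GH X MX Y MY T t =
     Sup {hausdorff_fuzzy M (Inl ` X) (Inr ` Y) t | M. admissible X MX Y MY T M}"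

text \<open>(t, e)-net: a family x_1..x_N (repetitions allowed).\<close>
definition is_net :: "'a set \<Rightarrow> ('a \<Rightarrow> 'a \<Rightarrow> real \<Rightarrow> real) \<Rightarrow> real \<Rightarrow> real \<Rightarrow> nat \<Rightarrow> (nat \<Rightarrow> 'a) \<Rightarrow> bool" where
  "is_net X M t e N xs \<longleftrightarrow>
     (\<forall>i\<in>{1..N}. xs i \<in> X) \<and> (\<forall>x\<in>X. \<exists>i\<in>{1..N}. M x (xs i) t > 1 - e)"

definition cover_number :: "'a set \<Rightarrow> ('a \<Rightarrow> 'a \<Rightarrow> real \<Rightarrow> real) \<Rightarrow> real \<Rightarrow> real \<Rightarrow> nat" where
  "cover_number X M e t =
     (LEAST n. \<exists>C. C \<subseteq> X \<and> finite C \<and> card C = n \<and> X = (\<Union>c\<in>C. fball X M c e t))"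

definition fdiam :: "'a set \<Rightarrow> ('a \<Rightarrow> 'a \<Rightarrow> real \<Rightarrow> real) \<Rightarrow> real \<Rightarrow> real" where
  "fdiam X M s = Inf {M x y s | x y. x \<in> X \<and> y \<in> X}"

end

theory Submission
  imports Defs
begin

context
  fixes T :: "real \<Rightarrow> real \<Rightarrow> real"
  assumes tn: "cont_tnorm T"
begin

lemma T_range: "a \<in> {0..1} \<Longrightarrow> b \<in> {0..1} \<Longrightarrow> T a b \<in> {0..1}"
  using tn unfolding cont_tnorm_def by blast
lemma T_ge0: "0 \<le> a \<Longrightarrow> a \<le> 1 \<Longrightarrow> 0 \<le> b \<Longrightarrow> b \<le> 1 \<Longrightarrow> 0 \<le> T a b"
  using T_range by auto
lemma T_le1: "0 \<le> a \<Longrightarrow> a \<le> 1 \<Longrightarrow> 0 \<le> b \<Longrightarrow> b \<le> 1 \<Longrightarrow> T a b \<le> 1"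
  using T_range by auto
lemma T_assoc: "a \<in> {0..1} \<Longrightarrow> b \<in> {0..1} \<Longrightarrow> c \<in> {0..1} \<Longrightarrow> T (T a b) c = T a (T b c)"
  using tn unfolding cont_tnorm_def by blast
lemma T_comm: "a \<in> {0..1} \<Longrightarrow> b \<in> {0..1} \<Longrightarrow> T a b = T b a"
  using tn unfolding cont_tnorm_def by blast
lemma T_one: "a \<in> {0..1} \<Longrightarrow> T a 1 = a"
  using tn unfolding cont_tnorm_def by blast
lemma T_one_left: "a \<in> {0..1} \<Longrightarrow> T 1 a = a"
  using T_one T_comm[of 1 a] by auto
lemma T_mono: "a \<in> {0..1} \<Longrightarrow> b \<in> {0..1} \<Longrightarrow> c \<in> {0..1} \<Longrightarrow> d \<in> {0..1} \<Longrightarrow>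
   a \<le> c \<Longrightarrow> b \<le> d \<Longrightarrow> T a b \<le> T c d"
  using tn unfolding cont_tnorm_def by blast
lemma T_cont: "continuous_on ({0..1} \<times> {0..1}) (\<lambda>(a, b). T a b)"
  using tn unfolding cont_tnorm_def by blast
lemma T_le_left: "a \<in> {0..1} \<Longrightarrow> b \<in> {0..1} \<Longrightarrow> T a b \<le> a"
  using T_mono[of a b a 1] T_one by auto
lemma T_le_right: "a \<in> {0..1} \<Longrightarrow> b \<in> {0..1} \<Longrightarrow> T a b \<le> b"
  using T_le_left T_comm by metis
lemma T_zero: "a \<in> {0..1} \<Longrightarrow> T a 0 = 0"
  using T_le_right[of a 0] T_range[of a 0] by auto
lemma T_zero_left: "a \<in> {0..1} \<Longrightarrow> T 0 a = 0"
  using T_le_left[of 0 a] T_range[of 0 a] by auto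

lemma T_cont_comp:
  assumes "(f \<longlongrightarrow> a) F" "(g \<longlongrightarrow> b) F" "a \<in> {0..1}" "b \<in> {0..1}"
    "eventually (\<lambda>x. f x \<in> {0..1} \<and> g x \<in> {0..1}) F"
  shows "((\<lambda>x. T (f x) (g x)) \<longlongrightarrow> T a b) F"
proof -
  have "((\<lambda>x. (\<lambda>(a, b). T a b) (f x, g x)) \<longlongrightarrow> (\<lambda>(a, b). T a b) (a, b)) F"
    apply (rule continuous_on_tendsto_compose[OF T_cont])
    using assms by (auto intro: tendsto_Pair elim!: eventually_mono)
  then show ?thesis by simp
qed

lemma T_cont_right: "continuous_on {0..1} (\<lambda>x. T a x)" if "a \<in> {0..1}"
proof -
  have "continuous_on {0..1} ((\<lambda>(a, b). T a b) \<circ> (\<lambda>x. (a, x)))"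
    apply (rule continuous_on_compose)
     apply (auto intro!: continuous_intros)
    apply (rule continuous_on_subset[OF T_cont])
    using that by auto
  then show ?thesis by (simp add: o_def)
qed

lemma T_cont_left: "continuous_on {0..1} (\<lambda>x. T x a)" if "a \<in> {0..1}"
proof -
  have "continuous_on {0..1} ((\<lambda>(a, b). T a b) \<circ> (\<lambda>x. (x, a)))"
    apply (rule continuous_on_compose)
     apply (auto intro!: continuous_intros)
    apply (rule continuous_on_subset[OF T_cont])
    using that by auto
  then show ?thesis by (simp add: o_def)
qed

lemma T_cont_diag: "continuous_on {0..1} (\<lambda>x. T x x)"
proof -
  have "continuous_on {0..1} ((\<lambda>(a, b). T a b) \<circ> (\<lambda>x. (x, x)))"
    apply (rule continuous_on_compose)
     apply (auto intro!: continuous_intros)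
    apply (rule continuous_on_subset[OF T_cont])
    by auto
  then show ?thesis by (simp add: o_def)
qed

lemma T_idem_below:
  assumes L: "L \<in> {0..1}" "T L L = L" and y: "0 \<le> y" "y \<le> L"
  shows "T y L = y"
proof -
  have "\<exists>x\<ge>0. x \<le> 1 \<and> T L x = y"
    apply (rule IVT')
    using L y T_zero T_one T_cont_right[OF L(1)] by auto
  then obtain x where x: "x \<in> {0..1}" "T L x = y" by auto
  have "T y L = T (T L x) L" using x by simp
  also have "\<dots> = T L (T x L)" using T_assoc x L by auto
  also have "\<dots> = T L (T L x)" using T_comm x L by auto
  also have "\<dots> = T (T L L) x" using T_assoc[of L L x] x L by auto
  also have "\<dots> = y" using L x by simp
  finally show ?thesis .
qed

lemma no_idem:
  assumes tn1: "TN1 T" and L: "0 < L" "L < 1" "T L L = L"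
  shows False
proof -
  have "L - T L L \<ge> T L (1 - L)" using tn1 L unfolding TN1_def by (metis atLeastAtMost_iff less_eq_real_def)
  then have z: "T L (1 - L) \<le> 0" using L by simp
  show False
  proof (cases "1 - L \<le> L")
    case True
    then have "T (1 - L) L = 1 - L" using T_idem_below[of L "1 - L"] L by auto
    then have "T L (1 - L) = 1 - L" using T_comm[of L "1-L"] L by auto
    then show False using z L by simp
  next
    case False
    then have "T L L \<le> T L (1 - L)" using T_mono[of L L L "1-L"] L by auto
    then show False using z L by simp
  qed
qed

lemma no_fix:
  assumes tn1: "TN1 T" and a: "0 < a" "a \<le> 1" and c: "0 \<le> c" "c < 1"
  shows "T a c < a"
proof (rule ccontr)
  assume "\<not> T a c < a"
  moreover have "T a c \<le> a" using T_le_left a c by auto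
  ultimately have ac: "T a c = a" by simp
  define Z where "Z = {x \<in> {0..1}. T a x = a}"
  have clZ: "closed Z" unfolding Z_def
    by (rule continuous_closed_preimage_constant[OF T_cont_right]) (use a in auto)
  have cZ: "c \<in> Z" using ac c unfolding Z_def by auto
  have bZ: "bdd_below Z" unfolding Z_def by (auto intro: bdd_belowI[of _ 0])
  define L where "L = Inf Z"
  have LZ: "L \<in> Z" unfolding L_def using closed_contains_Inf[OF _ bZ clZ] cZ by auto
  have Lc: "L \<le> c" unfolding L_def using cInf_lower[OF cZ bZ] .
  have L01: "L \<in> {0..1}" and aL: "T a L = a" using LZ unfolding Z_def by auto
  have LL01: "T L L \<in> {0..1}" using T_range L01 by auto
  have "T a (T L L) = T (T a L) L" using T_assoc a L01 by auto
  also have "\<dots> = a" using aL by simp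
  finally have "T L L \<in> Z" unfolding Z_def using LL01 by auto
  then have "L \<le> T L L" unfolding L_def using cInf_lower[OF _ bZ] by auto
  moreover have "T L L \<le> L" using T_le_left L01 by auto
  ultimately have idem: "T L L = L" by simp
  have "L \<noteq> 0" using aL T_zero a by auto
  then have "0 < L" using L01 by auto
  then show False using no_idem[OF tn1 _ _ idem] Lc c by auto
qed

end

lemma na_parts1: assumes "non_archimedean X M T" shows "cont_tnorm T"
  using assms unfolding non_archimedean_def fuzzy_metric_def apply (elim conjE) by assumption

lemma na_parts2: assumes "non_archimedean X M T" shows "\<forall>x\<in>X. \<forall>y\<in>X. \<forall>t\<ge>0. M x y t \<in> {0..1}"
  using assms unfolding non_archimedean_def fuzzy_metric_def apply (elim conjE) by assumption

lemma na_parts3: assumes "non_archimedean X M T" shows "\<forall>x\<in>X. \<forall>y\<in>X. M x y 0 = 0"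
  using assms unfolding non_archimedean_def fuzzy_metric_def apply (elim conjE) by assumption

lemma na_parts4: assumes "non_archimedean X M T" shows "\<forall>x\<in>X. \<forall>y\<in>X. (\<forall>t>0. M x y t = 1) \<longleftrightarrow> x = y"
  using assms unfolding non_archimedean_def fuzzy_metric_def apply (elim conjE) by assumption

lemma na_parts5: assumes "non_archimedean X M T" shows "\<forall>x\<in>X. \<forall>y\<in>X. \<forall>t>0. M x y t = M y x t"
  using assms unfolding non_archimedean_def fuzzy_metric_def apply (elim conjE) by assumption

lemma na_parts6: assumes "non_archimedean X M T" shows "\<forall>x\<in>X. \<forall>y\<in>X. \<forall>t>0. continuous (at_left t) (M x y)"
  using assms unfolding non_archimedean_def fuzzy_metric_def apply (elim conjE) by assumption

lemma na_parts7: assumes "non_archimedean X M T" shows "\<forall>x\<in>X. \<forall>y\<in>X. \<forall>z\<in>X. \<forall>t>0. \<forall>s>0. T (M x y t) (M y z s) \<le> M x z (max t s)"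
  using assms unfolding non_archimedean_def fuzzy_metric_def apply (elim conjE) by assumption

lemma na_tn: "non_archimedean X M T \<Longrightarrow> cont_tnorm T"
  using na_parts1 .
lemma na_range: "non_archimedean X M T \<Longrightarrow> x \<in> X \<Longrightarrow> y \<in> X \<Longrightarrow> s \<ge> 0 \<Longrightarrow> M x y s \<in> {0..1}"
  using na_parts2 by metis
lemma na_self: "non_archimedean X M T \<Longrightarrow> x \<in> X \<Longrightarrow> s > 0 \<Longrightarrow> M x x s = 1"
  using na_parts4 by metis
lemma na_zero: "non_archimedean X M T \<Longrightarrow> x \<in> X \<Longrightarrow> y \<in> X \<Longrightarrow> M x y 0 = 0"
  using na_parts3 by metis
lemma na_sym: "non_archimedean X M T \<Longrightarrow> x \<in> X \<Longrightarrow> y \<in> X \<Longrightarrow> s > 0 \<Longrightarrow> M x y s = M y x s"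
  using na_parts5 by metis
lemma na_ineq: "non_archimedean X M T \<Longrightarrow> x \<in> X \<Longrightarrow> y \<in> X \<Longrightarrow> z \<in> X \<Longrightarrow> t > 0 \<Longrightarrow> s > 0
   \<Longrightarrow> T (M x y t) (M y z s) \<le> M x z (max t s)"
  using na_parts7 by metis
lemma na_lcont: "non_archimedean X M T \<Longrightarrow> x \<in> X \<Longrightarrow> y \<in> X \<Longrightarrow> t > 0 \<Longrightarrow> continuous (at_left t) (M x y)"
  using na_parts6 by metis

lemma na_mono:
  assumes na: "non_archimedean X M T" and xy: "x \<in> X" "y \<in> X" and s: "0 < s" "s \<le> s'"
  shows "M x y s \<le> M x y s'"
proof -
  have "T (M x y s) (M y y s') \<le> M x y (max s s')" using na_ineq[OF na xy(1) xy(2) xy(2), of s s'] s by auto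
  then show ?thesis using na_self[OF na xy(2)] s T_one[OF na_tn[OF na], of "M x y s"]
      na_range[OF na xy, of s] by (simp add: max_absorb2)
qed

lemma na_intro:
  assumes tn: "cont_tnorm T"
    and rng: "\<And>x y t. x \<in> X \<Longrightarrow> y \<in> X \<Longrightarrow> t \<ge> 0 \<Longrightarrow> M x y t \<in> {0..1}"
    and z: "\<And>x y. x \<in> X \<Longrightarrow> y \<in> X \<Longrightarrow> M x y 0 = 0"
    and km2: "\<And>x y. x \<in> X \<Longrightarrow> y \<in> X \<Longrightarrow> (\<forall>t>0. M x y t = 1) \<longleftrightarrow> x = y"
    and sym: "\<And>x y t. x \<in> X \<Longrightarrow> y \<in> X \<Longrightarrow> t > 0 \<Longrightarrow> M x y t = M y x t"
    and ineq: "\<And>x y z t s. x \<in> X \<Longrightarrow> y \<in> X \<Longrightarrow> z \<in> X \<Longrightarrow> t > 0 \<Longrightarrow> s > 0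
        \<Longrightarrow> T (M x y t) (M y z s) \<le> M x z (max t s)"
    and lc: "\<And>x y t. x \<in> X \<Longrightarrow> y \<in> X \<Longrightarrow> t > 0 \<Longrightarrow> continuous (at_left t) (M x y)"
  shows "non_archimedean X M T"
proof -
  have mono: "M x y s \<le> M x y s'" if "x \<in> X" "y \<in> X" "0 < s" "s \<le> s'" for x y s s'
  proof -
    have "T (M x y s) (M y y s') \<le> M x y (max s s')" using ineq[of x y y s s'] that by auto
    moreover have "M y y s' = 1" using km2[of y y] that by auto
    ultimately show ?thesis using T_one[OF tn, of "M x y s"] rng[of x y s] that by (simp add: max_absorb2)
  qed
  have km4: "T (M x y t) (M y z s) \<le> M x z (t + s)" if "x \<in> X" "y \<in> X" "z \<in> X" "t > 0" "s > 0" for x y z t s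
  proof -
    have "M x z (max t s) \<le> M x z (t + s)" using mono[of x z "max t s" "t + s"] that by auto
    then show ?thesis using ineq[OF that] by linarith
  qed
  show ?thesis unfolding non_archimedean_def fuzzy_metric_def
    apply (intro conjI)
    apply (fact tn)
    using rng apply blast
    using z apply blast
    using km2 apply blast
    using sym apply blast
    using km4 apply blast
    using lc apply blast
    using ineq by blast
qed

lemma tendsto_Max_fin:
  fixes f :: "'i \<Rightarrow> 'x \<Rightarrow> real"
  assumes "finite I" "I \<noteq> {}" "\<And>i. i \<in> I \<Longrightarrow> (f i \<longlongrightarrow> l i) F"
  shows "((\<lambda>x. Max ((\<lambda>i. f i x) ` I)) \<longlongrightarrow> Max (l ` I)) F"
  using assms
proof (induction I rule: finite_ne_induct)
  case (singleton i)
  then show ?case by simp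
next
  case (insert j I)
  have "((\<lambda>x. Max ((\<lambda>i. f i x) ` I)) \<longlongrightarrow> Max (l ` I)) F" using insert.IH insert.prems by auto
  moreover have fj: "(f j \<longlongrightarrow> l j) F" using insert.prems by auto
  ultimately have "((\<lambda>x. max (f j x) (Max ((\<lambda>i. f i x) ` I))) \<longlongrightarrow> max (l j) (Max (l ` I))) F"
    using tendsto_max[OF fj] by blast
  then show ?case using insert by simp
qed

definition crs where
  "crs T MX MY xs ys N c t0 u v s = (if s \<le> t0 then 0 else
     Max ((\<lambda>i. T (T (MX u (xs i) s) (MY (ys i) v s)) c) ` {1..N}))"

definition glue where
  "glue T MX MY xs ys N c t0 p q s = (case p of
      Inl x \<Rightarrow> (case q of Inl y \<Rightarrow> MX x y s | Inr y \<Rightarrow> crs T MX MY xs ys N c t0 x y s)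
    | Inr x \<Rightarrow> (case q of Inl y \<Rightarrow> crs T MX MY xs ys N c t0 y x s | Inr y \<Rightarrow> MY x y s))"

locale glue_ctx =
  fixes T :: "real \<Rightarrow> real \<Rightarrow> real" and X :: "'a set" and MX Y and MY :: "'b \<Rightarrow> 'b \<Rightarrow> real \<Rightarrow> real"
    and xs ys and N :: nat and c t0 :: real
  assumes nX: "non_archimedean X MX T" and nY: "non_archimedean Y MY T"
    and xs: "\<And>i. i \<in> {1..N} \<Longrightarrow> xs i \<in> X" and ys: "\<And>i. i \<in> {1..N} \<Longrightarrow> ys i \<in> Y"
    and N: "N \<ge> 1" and c: "0 \<le> c" "c \<le> 1" and t0: "t0 > 0"
    and keyXY: "\<And>s i j. s > t0 \<Longrightarrow> i \<in> {1..N} \<Longrightarrow> j \<in> {1..N} \<Longrightarrow>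
        T (MY (ys i) (ys j) s) c \<le> MX (xs i) (xs j) s"
    and keyYX: "\<And>s i j. s > t0 \<Longrightarrow> i \<in> {1..N} \<Longrightarrow> j \<in> {1..N} \<Longrightarrow>
        T (MX (xs i) (xs j) s) c \<le> MY (ys i) (ys j) s"
begin

abbreviation "K \<equiv> crs T MX MY xs ys N c t0"

lemma tn: "cont_tnorm T" using na_tn[OF nX] .

lemma rX: "x \<in> X \<Longrightarrow> y \<in> X \<Longrightarrow> s \<ge> 0 \<Longrightarrow> MX x y s \<in> {0..1}" using na_range[OF nX] .
lemma rY: "x \<in> Y \<Longrightarrow> y \<in> Y \<Longrightarrow> s \<ge> 0 \<Longrightarrow> MY x y s \<in> {0..1}" using na_range[OF nY] .

lemma c01: "c \<in> {0..1}" using c by auto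

lemma terms_range: "u \<in> X \<Longrightarrow> v \<in> Y \<Longrightarrow> s \<ge> 0 \<Longrightarrow> i \<in> {1..N} \<Longrightarrow>
   T (T (MX u (xs i) s) (MY (ys i) v s)) c \<in> {0..1}"
  using T_range[OF tn] rX rY xs ys c01 by metis

lemma fin: "finite {1..N}" "{1..N} \<noteq> {}" using N by auto

lemma K_low: "s \<le> t0 \<Longrightarrow> K u v s = 0" unfolding crs_def by simp

lemma K_obtain: assumes "s > t0" shows "\<exists>i\<in>{1..N}. K u v s = T (T (MX u (xs i) s) (MY (ys i) v s)) c"
proof -
  have "Max ((\<lambda>i. T (T (MX u (xs i) s) (MY (ys i) v s)) c) ` {1..N}) \<in> (\<lambda>i. T (T (MX u (xs i) s) (MY (ys i) v s)) c) ` {1..N}"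
    using fin by (intro Max_in) auto
  then show ?thesis using assms unfolding crs_def by auto
qed

lemma K_ge: assumes "s > t0" "i \<in> {1..N}" shows "T (T (MX u (xs i) s) (MY (ys i) v s)) c \<le> K u v s"
  using assms fin unfolding crs_def by (auto intro!: Max_ge)

lemma K_range: assumes "u \<in> X" "v \<in> Y" "s \<ge> 0" shows "K u v s \<in> {0..1}"
proof (cases "s \<le> t0")
  case True then show ?thesis using K_low by simp
next
  case False
  then obtain i where "i \<in> {1..N}" "K u v s = T (T (MX u (xs i) s) (MY (ys i) v s)) c"
    using K_obtain by force
  then show ?thesis using terms_range assms by auto
qed

lemma A:
  assumes u: "u \<in> X" "u' \<in> X" and v: "v \<in> Y" and s: "s1 > 0" "s2 > 0"
  shows "T (MX u u' s1) (K u' v s2) \<le> K u v (max s1 s2)"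
proof (cases "s2 \<le> t0")
  case True
  then show ?thesis using K_low T_zero[OF tn] rX[OF u] K_range[OF u(1) v] s by auto
next
  case False
  define m where "m = max s1 s2"
  then have m: "m > t0" "s1 \<le> m" "s2 \<le> m" using False by auto
  obtain i where i: "i \<in> {1..N}" "K u' v s2 = T (T (MX u' (xs i) s2) (MY (ys i) v s2)) c"
    using K_obtain False by force
  note xi = xs[OF i(1)] and yi = ys[OF i(1)]
  define a where "a = MX u u' s1"
  define b where "b = MX u' (xs i) s2"
  define d where "d = MY (ys i) v s2"
  have r: "a \<in> {0..1}" "b \<in> {0..1}" "d \<in> {0..1}" unfolding a_def b_def d_def
    using rX rY u v xi yi s by auto
  have "T a (K u' v s2) = T a (T (T b d) c)" using i by (simp add: b_def d_def)
  also have "\<dots> = T (T (T a b) d) c"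
  proof -
    have TR: "T b d \<in> {0..1}" "T a b \<in> {0..1}" using T_range[OF tn] r by auto
    have "T a (T (T b d) c) = T (T a (T b d)) c" using T_assoc[OF tn, of a "T b d" c] r TR c01 by simp
    also have "T a (T b d) = T (T a b) d" using T_assoc[OF tn, of a b d] r by simp
    finally show ?thesis .
  qed
  also have "\<dots> \<le> T (T (MX u (xs i) m) (MY (ys i) v m)) c"
  proof -
    have ab: "T a b \<le> MX u (xs i) m" unfolding a_def b_def m_def using na_ineq[OF nX u xi] s by auto
    have dd: "d \<le> MY (ys i) v m" unfolding d_def using na_mono[OF nY yi v] s m by auto
    have r2: "MX u (xs i) m \<in> {0..1}" "MY (ys i) v m \<in> {0..1}" using rX rY u xi yi v m t0 by auto
    have TR: "T a b \<in> {0..1}" using T_range[OF tn] r by auto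
    have "T (T a b) d \<le> T (MX u (xs i) m) (MY (ys i) v m)"
      using T_mono[OF tn TR r(3) r2 ab dd] .
    moreover have "T (T a b) d \<in> {0..1}" "T (MX u (xs i) m) (MY (ys i) v m) \<in> {0..1}"
      using T_range[OF tn] TR r r2 by auto
    ultimately show ?thesis using T_mono[OF tn _ c01 _ c01] by auto
  qed
  also have "\<dots> \<le> K u v m" using K_ge[OF m(1) i(1)] .
  finally show ?thesis unfolding a_def m_def .
qed

lemma B:
  assumes u: "u \<in> X" "u' \<in> X" and v: "v \<in> Y" and s: "s1 > 0" "s2 > 0"
  shows "T (K u v s1) (K u' v s2) \<le> MX u u' (max s1 s2)"
proof (cases "s1 \<le> t0 \<or> s2 \<le> t0")
  case True
  have "T (K u v s1) (K u' v s2) = 0"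
    using True K_low T_zero[OF tn] T_zero_left[OF tn] K_range u v s by auto
  then show ?thesis using rX[OF u, of "max s1 s2"] s by auto
next
  case False
  define m where "m = max s1 s2"
  then have m: "m > t0" "s1 \<le> m" "s2 \<le> m" using False by auto
  obtain i where i: "i \<in> {1..N}" "K u v s1 = T (T (MX u (xs i) s1) (MY (ys i) v s1)) c"
    using K_obtain False by force
  obtain j where j: "j \<in> {1..N}" "K u' v s2 = T (T (MX u' (xs j) s2) (MY (ys j) v s2)) c"
    using K_obtain False by force
  note xi = xs[OF i(1)] and yi = ys[OF i(1)] and xj = xs[OF j(1)] and yj = ys[OF j(1)]
  define P where "P = MX u (xs i) m"
  define Q where "Q = MY (ys i) v m"
  define R where "R = MY v (ys j) m"
  define S where "S = MX (xs j) u' m"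
  have r: "P \<in> {0..1}" "Q \<in> {0..1}" "R \<in> {0..1}" "S \<in> {0..1}" unfolding P_def Q_def R_def S_def
    using rX rY u v xi yi xj yj m t0 by auto
  have r1: "MX u (xs i) s1 \<in> {0..1}" "MY (ys i) v s1 \<in> {0..1}" "MX u' (xs j) s2 \<in> {0..1}" "MY (ys j) v s2 \<in> {0..1}"
    using rX rY u v xi yi xj yj s by auto
  have le1: "MX u (xs i) s1 \<le> P" "MY (ys i) v s1 \<le> Q" unfolding P_def Q_def
    using na_mono[OF nX u(1) xi] na_mono[OF nY yi v] s m by auto
  have le2: "MX u' (xs j) s2 \<le> S" "MY (ys j) v s2 \<le> R" unfolding S_def R_def
    using na_mono[OF nX u(2) xj, of s2 m] na_mono[OF nY yj v, of s2 m] s m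
      na_sym[OF nX u(2) xj, of m] na_sym[OF nY yj v, of m] t0 by auto
  have TR: "\<And>a b. a \<in> {0..1} \<Longrightarrow> b \<in> {0..1} \<Longrightarrow> T a b \<in> {0..1}" using T_range[OF tn] .
  have TM: "\<And>a b a' b'. a \<in> {0..1} \<Longrightarrow> b \<in> {0..1} \<Longrightarrow> a' \<in> {0..1} \<Longrightarrow> b' \<in> {0..1} \<Longrightarrow> a \<le> a' \<Longrightarrow> b \<le> b' \<Longrightarrow> T a b \<le> T a' b'"
    using T_mono[OF tn] by blast
  have TA: "\<And>a b d. a \<in> {0..1} \<Longrightarrow> b \<in> {0..1} \<Longrightarrow> d \<in> {0..1} \<Longrightarrow> T (T a b) d = T a (T b d)"
    using T_assoc[OF tn] by blast
  have TC: "\<And>a b. a \<in> {0..1} \<Longrightarrow> b \<in> {0..1} \<Longrightarrow> T a b = T b a"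
    using T_comm[OF tn] by blast
  have "T (K u v s1) (K u' v s2) \<le> T (T (T P Q) c) (T (MX u' (xs j) s2) (MY (ys j) v s2))"
  proof -
    have "T (MX u (xs i) s1) (MY (ys i) v s1) \<le> T P Q" using TM r r1 le1 by blast
    then have "T (T (MX u (xs i) s1) (MY (ys i) v s1)) c \<le> T (T P Q) c" using TM TR r r1 c01 by auto
    moreover have "K u' v s2 \<le> T (MX u' (xs j) s2) (MY (ys j) v s2)"
      using j T_le_left[OF tn] TR r1 c01 by auto
    ultimately show ?thesis using i TM TR r r1 c01 K_range[OF u(2) v, of s2] s by simp
  qed
  also have "\<dots> \<le> T (T (T P Q) c) (T S R)"
  proof -
    have "T (MX u' (xs j) s2) (MY (ys j) v s2) \<le> T S R" using TM r r1 le2 by blast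
    then show ?thesis using TM TR r r1 c01 by auto
  qed
  also have "\<dots> = T (T P (T (T Q R) c)) S"
  proof -
    have q: "T Q c \<in> {0..1}" "T S R \<in> {0..1}" "T Q R \<in> {0..1}" "T R Q \<in> {0..1}"
      using TR r c01 by auto
    define W where "W = T (T Q R) c"
    have w: "W \<in> {0..1}" unfolding W_def using TR q c01 by auto
    have e1: "T (T (T P Q) c) (T S R) = T P (T (T Q c) (T S R))"
      using TA[of P Q c] TA[of P "T Q c" "T S R"] r c01 q by simp
    have e2: "T (T Q c) (T S R) = T S (T R (T Q c))"
      using TC[of "T Q c" "T S R"] TA[of S R "T Q c"] r q by simp
    have e3: "T R (T Q c) = W"
      using TA[of R Q c] TC[of R Q] r c01 unfolding W_def by simp
    have e4: "T P (T S W) = T (T P W) S"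
      using TC[of S W] TA[of P W S] r w by simp
    show ?thesis using e1 e2 e3 e4 unfolding W_def by simp
  qed
  also have "\<dots> \<le> MX u u' m"
  proof -
    have qr: "T Q R \<le> MY (ys i) (ys j) m" unfolding Q_def R_def using na_ineq[OF nY yi v yj, of m m] m t0 by auto
    have rij: "MY (ys i) (ys j) m \<in> {0..1}" "MX (xs i) (xs j) m \<in> {0..1}" using rX rY xi xj yi yj m t0 by auto
    have "T (T Q R) c \<le> T (MY (ys i) (ys j) m) c" using TM TR r c01 qr rij by auto
    also have "\<dots> \<le> MX (xs i) (xs j) m" using keyXY[OF m(1) i(1) j(1)] .
    finally have w: "T (T Q R) c \<le> MX (xs i) (xs j) m" .
    have "T P (T (T Q R) c) \<le> T P (MX (xs i) (xs j) m)" using TM TR r c01 w rij by auto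
    also have "\<dots> \<le> MX u (xs j) m" unfolding P_def using na_ineq[OF nX u(1) xi xj, of m m] m t0 by auto
    finally have w2: "T P (T (T Q R) c) \<le> MX u (xs j) m" .
    have "T (T P (T (T Q R) c)) S \<le> T (MX u (xs j) m) S" using TM TR r c01 w2 rX u xj m t0 by auto
    also have "\<dots> \<le> MX u u' m" unfolding S_def using na_ineq[OF nX u(1) xj u(2), of m m] m t0 by auto
    finally show ?thesis .
  qed
  finally show ?thesis unfolding m_def .
qed

lemma K_lcont: assumes u: "u \<in> X" and v: "v \<in> Y" and s: "s > 0"
  shows "continuous (at_left s) (K u v)"
  unfolding continuous_within
proof (cases "s \<le> t0")
  case True
  have "eventually (\<lambda>r. K u v r = K u v s) (at_left s)"
    using True K_low by (intro eventually_at_leftI[of "s - 1"]) auto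
  then show "(K u v \<longlongrightarrow> K u v s) (at_left s)" by (rule tendsto_eventually)
next
  case False
  define F where "F = (\<lambda>i r. T (T (MX u (xs i) r) (MY (ys i) v r)) c)"
  have ev: "eventually (\<lambda>r. r > t0) (at_left s)"
    using False by (intro eventually_at_leftI[of t0]) auto
  have ev0: "eventually (\<lambda>r. r > 0) (at_left s)"
    using ev t0 eventually_mono by force
  have Fi: "(F i \<longlongrightarrow> F i s) (at_left s)" if i: "i \<in> {1..N}" for i
  proof -
    have r1: "\<And>r. r > 0 \<Longrightarrow> MX u (xs i) r \<in> {0..1}" using rX[OF u xs[OF i]] by auto
    have r2: "\<And>r. r > 0 \<Longrightarrow> MY (ys i) v r \<in> {0..1}" using rY[OF ys[OF i] v] by auto
    have t1: "(MX u (xs i) \<longlongrightarrow> MX u (xs i) s) (at_left s)"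
      using na_lcont[OF nX u xs[OF i] s] unfolding continuous_within .
    have t2: "(MY (ys i) v \<longlongrightarrow> MY (ys i) v s) (at_left s)"
      using na_lcont[OF nY ys[OF i] v s] unfolding continuous_within .
    have e1: "eventually (\<lambda>r. MX u (xs i) r \<in> {0..1} \<and> MY (ys i) v r \<in> {0..1}) (at_left s)"
      using ev0 r1 r2 eventually_mono by force
    have t3: "((\<lambda>r. T (MX u (xs i) r) (MY (ys i) v r)) \<longlongrightarrow> T (MX u (xs i) s) (MY (ys i) v s)) (at_left s)"
      by (rule T_cont_comp[OF tn t1 t2 r1[OF s] r2[OF s] e1])
    have e2: "eventually (\<lambda>r. T (MX u (xs i) r) (MY (ys i) v r) \<in> {0..1} \<and> c \<in> {0..1}) (at_left s)"
      using e1 T_range[OF tn] c01 eventually_mono by force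
    show ?thesis unfolding F_def
      by (rule T_cont_comp[OF tn t3 tendsto_const _ c01 e2]) (use T_range[OF tn] r1 r2 s in auto)
  qed
  have lim: "((\<lambda>r. Max ((\<lambda>i. F i r) ` {1..N})) \<longlongrightarrow> Max ((\<lambda>i. F i s) ` {1..N})) (at_left s)"
    using tendsto_Max_fin[OF fin Fi] by simp
  have Ks: "K u v s = Max ((\<lambda>i. F i s) ` {1..N})" using False unfolding crs_def F_def by simp
  have evK: "eventually (\<lambda>r. Max ((\<lambda>i. F i r) ` {1..N}) = K u v r) (at_left s)"
  proof -
    have "\<And>r. r > t0 \<Longrightarrow> Max ((\<lambda>i. F i r) ` {1..N}) = K u v r" unfolding crs_def F_def by simp
    then show ?thesis using ev eventually_mono by force
  qed
  show "(K u v \<longlongrightarrow> K u v s) (at_left s)"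
    using Lim_transform_eventually[OF lim evK] Ks by simp
qed

end


lemma glue_ctx_swap: "glue_ctx T X MX Y MY xs ys N c t0 \<Longrightarrow> glue_ctx T Y MY X MX ys xs N c t0"
  unfolding glue_ctx_def by (elim conjE) (intro conjI; assumption)

lemma glue_simps:
  "glue T MX MY xs ys N c t0 (Inl x) (Inl y) = MX x y"
  "glue T MX MY xs ys N c t0 (Inl x) (Inr v) = crs T MX MY xs ys N c t0 x v"
  "glue T MX MY xs ys N c t0 (Inr v) (Inl x) = crs T MX MY xs ys N c t0 x v"
  "glue T MX MY xs ys N c t0 (Inr v) (Inr w) = MY v w"
  by (auto simp: glue_def fun_eq_iff)

context glue_ctx
begin

abbreviation "G \<equiv> glue T MX MY xs ys N c t0"

lemma swapK: assumes u: "u \<in> X" and v: "v \<in> Y" and s: "s \<ge> 0"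
  shows "crs T MY MX ys xs N c t0 v u s = K u v s"
proof (cases "s \<le> t0")
  case True then show ?thesis unfolding crs_def by simp
next
  case False
  have "\<And>i. i \<in> {1..N} \<Longrightarrow> T (T (MY v (ys i) s) (MX (xs i) u s)) c = T (T (MX u (xs i) s) (MY (ys i) v s)) c"
  proof -
    fix i assume i: "i \<in> {1..N}"
    have "MY v (ys i) s = MY (ys i) v s" using na_sym[OF nY v ys[OF i]] False t0 by auto
    moreover have "MX (xs i) u s = MX u (xs i) s" using na_sym[OF nX xs[OF i] u] False t0 by auto
    moreover have "T (MY (ys i) v s) (MX u (xs i) s) = T (MX u (xs i) s) (MY (ys i) v s)"
      using T_comm[OF tn] rX rY u v xs[OF i] ys[OF i] s by auto
    ultimately show "T (T (MY v (ys i) s) (MX (xs i) u s)) c = T (T (MX u (xs i) s) (MY (ys i) v s)) c"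
      by simp
  qed
  then have "(\<lambda>i. T (T (MY v (ys i) s) (MX (xs i) u s)) c) ` {1..N} = (\<lambda>i. T (T (MX u (xs i) s) (MY (ys i) v s)) c) ` {1..N}"
    by (rule image_cong[OF refl])
  then show ?thesis unfolding crs_def using False by simp
qed

lemma glue_ineq:
  assumes p: "p \<in> X <+> Y" and q: "q \<in> X <+> Y" and r: "r \<in> X <+> Y" and t: "t > 0" and s: "s > 0"
  shows "T (G p q t) (G q r s) \<le> G p r (max t s)"
proof -
  interpret sw: glue_ctx T Y MY X MX ys xs N c t0 by (rule glue_ctx_swap) (rule glue_ctx_axioms)
  have TC: "\<And>a b. a \<in> {0..1} \<Longrightarrow> b \<in> {0..1} \<Longrightarrow> T a b = T b a" using T_comm[OF tn] by blast
  show ?thesis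
  proof (cases p)
    case (Inl x)
    then have x: "x \<in> X" using p by auto
    show ?thesis
    proof (cases q)
      case (Inl y)
      then have y: "y \<in> X" using q by auto
      show ?thesis
      proof (cases r)
        case (Inl z)
        then have z: "z \<in> X" using r by auto
        show ?thesis using na_ineq[OF nX x y z t s] \<open>p = Inl x\<close> \<open>q = Inl y\<close> \<open>r = Inl z\<close> by (simp add: glue_simps)
      next
        case (Inr z)
        then have z: "z \<in> Y" using r by auto
        show ?thesis using A[OF x y z t s] \<open>p = Inl x\<close> \<open>q = Inl y\<close> \<open>r = Inr z\<close> by (simp add: glue_simps)
      qed
    next
      case (Inr y)
      then have y: "y \<in> Y" using q by auto
      show ?thesis
      proof (cases r)
        case (Inl z)
        then have z: "z \<in> X" using r by auto
        show ?thesis using B[OF x z y t s] \<open>p = Inl x\<close> \<open>q = Inr y\<close> \<open>r = Inl z\<close> by (simp add: glue_simps)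
      next
        case (Inr z)
        then have z: "z \<in> Y" using r by auto
        have "T (MY z y s) (sw.K y x t) \<le> sw.K z x (max s t)" using sw.A[OF z y x s t] .
        moreover have "sw.K y x t = K x y t" "sw.K z x (max s t) = K x z (max t s)"
          using swapK x y z t s by (auto simp: max.commute)
        moreover have "MY z y s = MY y z s" using na_sym[OF nY z y s] .
        moreover have "T (MY y z s) (K x y t) = T (K x y t) (MY y z s)"
          using TC rY[OF y z] K_range[OF x y] s t by auto
        ultimately show ?thesis using \<open>p = Inl x\<close> \<open>q = Inr y\<close> \<open>r = Inr z\<close> by (simp add: glue_simps)
      qed
    qed
  next
    case (Inr x)
    then have x: "x \<in> Y" using p by auto
    show ?thesis
    proof (cases q)
      case (Inl y)
      then have y: "y \<in> X" using q by auto
      show ?thesis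
      proof (cases r)
        case (Inl z)
        then have z: "z \<in> X" using r by auto
        have "T (MX z y s) (K y x t) \<le> K z x (max s t)" using A[OF z y x s t] .
        moreover have "MX z y s = MX y z s" using na_sym[OF nX z y s] .
        moreover have "T (MX y z s) (K y x t) = T (K y x t) (MX y z s)"
          using TC rX[OF y z] K_range[OF y x] s t by auto
        ultimately show ?thesis using \<open>p = Inr x\<close> \<open>q = Inl y\<close> \<open>r = Inl z\<close>
          by (simp add: glue_simps max.commute)
      next
        case (Inr z)
        then have z: "z \<in> Y" using r by auto
        have "T (sw.K x y t) (sw.K z y s) \<le> MY x z (max t s)" using sw.B[OF x z y t s] .
        moreover have "sw.K x y t = K y x t" "sw.K z y s = K y z s"
          using swapK x y z t s by auto
        ultimately show ?thesis using \<open>p = Inr x\<close> \<open>q = Inl y\<close> \<open>r = Inr z\<close> by (simp add: glue_simps)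
      qed
    next
      case (Inr y)
      then have y: "y \<in> Y" using q by auto
      show ?thesis
      proof (cases r)
        case (Inl z)
        then have z: "z \<in> X" using r by auto
        have "T (MY x y t) (sw.K y z s) \<le> sw.K x z (max t s)" using sw.A[OF x y z t s] .
        moreover have "sw.K y z s = K z y s" "sw.K x z (max t s) = K z x (max t s)"
          using swapK x y z t s by auto
        ultimately show ?thesis using \<open>p = Inr x\<close> \<open>q = Inr y\<close> \<open>r = Inl z\<close> by (simp add: glue_simps)
      next
        case (Inr z)
        then have z: "z \<in> Y" using r by auto
        show ?thesis using na_ineq[OF nY x y z t s] \<open>p = Inr x\<close> \<open>q = Inr y\<close> \<open>r = Inr z\<close> by (simp add: glue_simps)
      qed
    qed
  qed
qed

lemma glue_na: "non_archimedean (X <+> Y) G T"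
proof (rule na_intro[OF tn])
  fix p q and t :: real assume p: "p \<in> X <+> Y" and q: "q \<in> X <+> Y" and t: "t \<ge> 0"
  show "G p q t \<in> {0..1}"
    using p q t rX rY K_range by (auto simp: glue_simps)
next
  fix p q assume p: "p \<in> X <+> Y" and q: "q \<in> X <+> Y"
  show "G p q 0 = 0"
    using p q na_zero[OF nX] na_zero[OF nY] K_low t0 by (auto simp: glue_simps)
next
  fix p q assume p: "p \<in> X <+> Y" and q: "q \<in> X <+> Y"
  have k: "False" if "\<forall>t>0. K u v t = 1" for u v using K_low[of t0 u v] t0 that by auto
  show "(\<forall>t>0. G p q t = 1) \<longleftrightarrow> p = q"
    using p q na_parts4[OF nX] na_parts4[OF nY] na_self[OF nX] na_self[OF nY] by (auto simp: glue_simps dest: k)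
next
  fix p q and t :: real assume p: "p \<in> X <+> Y" and q: "q \<in> X <+> Y" and t: "t > 0"
  show "G p q t = G q p t"
    using p q t na_sym[OF nX] na_sym[OF nY] by (auto simp: glue_simps)
next
  fix p q r and t s :: real assume "p \<in> X <+> Y" "q \<in> X <+> Y" "r \<in> X <+> Y" "t > 0" "s > 0"
  then show "T (G p q t) (G q r s) \<le> G p r (max t s)" by (rule glue_ineq)
next
  fix p q and t :: real assume p: "p \<in> X <+> Y" and q: "q \<in> X <+> Y" and t: "t > 0"
  show "continuous (at_left t) (G p q)"
    using p q t na_lcont[OF nX] na_lcont[OF nY] K_lcont by (auto simp: glue_simps)
qed

lemma glue_adm: "admissible X MX Y MY T G"
  unfolding admissible_def using glue_na by (simp add: glue_simps)

lemma glue_haus: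
  assumes netX: "\<And>u. u \<in> X \<Longrightarrow> \<exists>i\<in>{1..N}. MX u (xs i) t0 > c"
    and netY: "\<And>v. v \<in> Y \<Longrightarrow> \<exists>i\<in>{1..N}. MY v (ys i) t0 > c"
    and t: "t > t0" and X: "X \<noteq> {}" and Y: "Y \<noteq> {}"
  shows "T c c \<le> hausdorff_fuzzy G (Inl ` X) (Inr ` Y) t"
proof -
  have cc: "T c c \<in> {0..1}" using T_range[OF tn] c01 by auto
  have P1: "T c c \<le> Sup ((\<lambda>b. G a b t) ` Inr ` Y)" if a: "a \<in> Inl ` X" for a
  proof -
    obtain u where u: "u \<in> X" "a = Inl u" using a by auto
    obtain i where i: "i \<in> {1..N}" "MX u (xs i) t0 > c" using netX[OF u(1)] by auto
    have m: "MX u (xs i) t0 \<le> MX u (xs i) t" using na_mono[OF nX u(1) xs[OF i(1)]] t t0 by auto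
    have r1: "MX u (xs i) t \<in> {0..1}" using rX u xs[OF i(1)] t t0 by auto
    have "T c c \<le> T (MX u (xs i) t) c" using T_mono[OF tn c01 c01 r1 c01] i m by auto
    also have "\<dots> = T (T (MX u (xs i) t) (MY (ys i) (ys i) t)) c"
      using na_self[OF nY ys[OF i(1)]] T_one[OF tn r1] t t0 by auto
    also have "\<dots> \<le> K u (ys i) t" using K_ge[OF t i(1)] .
    also have "\<dots> \<le> Sup ((\<lambda>b. G a b t) ` Inr ` Y)"
      apply (rule cSup_upper)
      using u ys[OF i(1)] apply (force simp: glue_simps)
      using u K_range t t0 by (auto intro!: bdd_aboveI[of _ 1] simp: glue_simps)
    finally show ?thesis .
  qed
  have P2: "T c c \<le> Sup ((\<lambda>a. G a b t) ` Inl ` X)" if b: "b \<in> Inr ` Y" for b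
  proof -
    obtain v where v: "v \<in> Y" "b = Inr v" using b by auto
    obtain i where i: "i \<in> {1..N}" "MY v (ys i) t0 > c" using netY[OF v(1)] by auto
    have m: "MY v (ys i) t0 \<le> MY (ys i) v t" using na_mono[OF nY v(1) ys[OF i(1)], of t0 t] t t0
      na_sym[OF nY v(1) ys[OF i(1)], of t] by auto
    have r1: "MY (ys i) v t \<in> {0..1}" using rY v ys[OF i(1)] t t0 by auto
    have "T c c \<le> T (MY (ys i) v t) c" using T_mono[OF tn c01 c01 r1 c01] i m by auto
    also have "\<dots> = T (T (MX (xs i) (xs i) t) (MY (ys i) v t)) c"
      using na_self[OF nX xs[OF i(1)]] T_one_left[OF tn r1] t t0 by auto
    also have "\<dots> \<le> K (xs i) v t" using K_ge[OF t i(1)] .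
    also have "\<dots> \<le> Sup ((\<lambda>a. G a b t) ` Inl ` X)"
      apply (rule cSup_upper)
      using v xs[OF i(1)] apply (force simp: glue_simps)
      using v K_range t t0 by (auto intro!: bdd_aboveI[of _ 1] simp: glue_simps)
    finally show ?thesis .
  qed
  show ?thesis unfolding hausdorff_fuzzy_def
    using X Y P1 P2 by (auto intro!: cInf_greatest)
qed

end

lemma haus_le1:
  assumes na: "non_archimedean (X <+> Y) M T" and X: "X \<noteq> {}" and Y: "Y \<noteq> {}" and t: "t \<ge> 0"
  shows "hausdorff_fuzzy M (Inl ` X) (Inr ` Y) t \<le> 1"
proof -
  obtain x0 where x0: "x0 \<in> X" using X by auto
  have rng: "\<And>a b. a \<in> X <+> Y \<Longrightarrow> b \<in> X <+> Y \<Longrightarrow> M a b t \<in> {0..1}" using na_range[OF na] t by blast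
  have bd: "bdd_above ((\<lambda>b. M a b t) ` Inr ` Y)" if "a \<in> Inl ` X" for a
    using that rng by (auto intro!: bdd_aboveI[of _ 1])
  have ge0: "0 \<le> Sup ((\<lambda>b. M a b t) ` Inr ` Y)" if "a \<in> Inl ` X" for a
  proof -
    obtain y where y: "y \<in> Y" using Y by auto
    show ?thesis
      apply (rule cSup_upper2[of "M a (Inr y) t"])
      using y that rng bd[OF that] by auto
  qed
  have le1: "Sup ((\<lambda>b. M (Inl x0) b t) ` Inr ` Y) \<le> 1"
    using Y x0 rng by (auto intro!: cSup_least)
  have "Inf ((\<lambda>a. Sup ((\<lambda>b. M a b t) ` Inr ` Y)) ` Inl ` X) \<le> Sup ((\<lambda>b. M (Inl x0) b t) ` Inr ` Y)"
    apply (rule cInf_lower)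
    using x0 apply auto[1]
    using ge0 by (auto intro!: bdd_belowI[of _ 0])
  then show ?thesis unfolding hausdorff_fuzzy_def using le1 by linarith
qed

lemma MGH_ge:
  assumes adm: "admissible X MX Y MY T M" and X: "X \<noteq> {}" and Y: "Y \<noteq> {}" and t: "t \<ge> 0"
    and h: "h \<le> hausdorff_fuzzy M (Inl ` X) (Inr ` Y) t"
  shows "h \<le> M_GH X MX Y MY T t"
  unfolding M_GH_def
proof (rule cSup_upper2[OF _ h])
  show "hausdorff_fuzzy M (Inl ` X) (Inr ` Y) t \<in> {hausdorff_fuzzy M (Inl ` X) (Inr ` Y) t |M. admissible X MX Y MY T M}"
    using adm by auto
  show "bdd_above {hausdorff_fuzzy M (Inl ` X) (Inr ` Y) t |M. admissible X MX Y MY T M}"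
  proof (rule bdd_aboveI[of _ 1])
    fix x assume "x \<in> {hausdorff_fuzzy M (Inl ` X) (Inr ` Y) t |M. admissible X MX Y MY T M}"
    then obtain M' where "x = hausdorff_fuzzy M' (Inl ` X) (Inr ` Y) t" "admissible X MX Y MY T M'" by blast
    then show "x \<le> 1" using haus_le1[OF _ X Y t] unfolding admissible_def by blast
  qed
qed


lemma choose_c:
  assumes tn: "cont_tnorm T" and th: "\<theta> < 1" and b: "0 < \<beta>" "\<beta> \<le> 1"
  shows "\<exists>c. 0 < c \<and> c < 1 \<and> T c c > \<theta> \<and> T \<beta> c > 0"
proof -
  have c1: "continuous_on {0..1} (\<lambda>x. T x x)" using T_cont_diag[OF tn] .
  have c2: "continuous_on {0..1} (\<lambda>x. T \<beta> x)" using T_cont_right[OF tn] b by auto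
  have one: "(1::real) \<in> {0..1}" by auto
  have h1: "\<forall>\<epsilon>>0. \<exists>\<delta>>0. \<forall>x'\<in>{0..1}. dist x' 1 < \<delta> \<longrightarrow> dist (T x' x') (T 1 1) < \<epsilon>"
    using c1 one unfolding continuous_on_iff by blast
  have "1 - \<theta> > 0" using th by simp
  then obtain d1 where d1: "d1 > 0" "\<forall>x'\<in>{0..1}. dist x' 1 < d1 \<longrightarrow> dist (T x' x') (T 1 1) < 1 - \<theta>"
    using h1 by blast
  have h2: "\<forall>\<epsilon>>0. \<exists>\<delta>>0. \<forall>x'\<in>{0..1}. dist x' 1 < \<delta> \<longrightarrow> dist (T \<beta> x') (T \<beta> 1) < \<epsilon>"
    using c2 one unfolding continuous_on_iff by blast
  obtain d2 where d2: "d2 > 0" "\<forall>x'\<in>{0..1}. dist x' 1 < d2 \<longrightarrow> dist (T \<beta> x') (T \<beta> 1) < \<beta>"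
    using h2 b by blast
  define c where "c = max (1/2) (1 - min d1 d2 / 2)"
  have c: "0 < c" "c < 1" "c \<in> {0..1}" "dist c 1 < d1" "dist c 1 < d2"
    using d1(1) d2(1) unfolding c_def dist_real_def by auto
  have "T 1 1 = 1" using T_one[OF tn, of 1] by simp
  then have "T c c > \<theta>" using d1(2) c by (auto simp: dist_real_def)
  moreover have "T \<beta> 1 = \<beta>" using T_one[OF tn, of \<beta>] b by simp
  then have "T \<beta> c > 0" using d2(2) c by (auto simp: dist_real_def)
  ultimately show ?thesis using c by blast
qed

lemma gap:
  assumes tn: "cont_tnorm T" and tn1: "TN1 T" and b: "0 < \<beta>" "\<beta> \<le> 1" and c: "0 \<le> c" "c < 1"
  shows "\<exists>\<gamma>>0. \<forall>a\<in>{\<beta>..1}. T a c \<le> a - \<gamma>"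
proof -
  have cont: "continuous_on {\<beta>..1} (\<lambda>a. a - T a c)"
    apply (intro continuous_intros)
    apply (rule continuous_on_subset[OF T_cont_left[OF tn]])
    using b c by auto
  obtain a0 where a0: "a0 \<in> {\<beta>..1}" "\<forall>a\<in>{\<beta>..1}. a0 - T a0 c \<le> a - T a c"
    using continuous_attains_inf[OF compact_Icc _ cont] b by auto
  have "T a0 c < a0" using no_fix[OF tn tn1, of a0 c] a0 b c by auto
  then show ?thesis using a0 by (intro exI[of _ "a0 - T a0 c"]) force
qed

lemma floor_close:
  fixes a b g :: real
  assumes g: "g > 0" and a: "a \<ge> 0" and b: "b \<ge> 0" and eq: "nat \<lfloor>a / g\<rfloor> = nat \<lfloor>b / g\<rfloor>"
  shows "\<bar>a - b\<bar> < g"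
proof -
  have "\<lfloor>a / g\<rfloor> \<ge> 0" "\<lfloor>b / g\<rfloor> \<ge> 0" using a b g by auto
  then have e: "\<lfloor>a / g\<rfloor> = \<lfloor>b / g\<rfloor>" using eq by (metis nat_eq_iff2)
  define z where "z = real_of_int \<lfloor>a / g\<rfloor>"
  have z1: "z \<le> a / g" "a / g < z + 1" unfolding z_def by linarith+
  have z2: "z \<le> b / g" "b / g < z + 1" unfolding z_def e by linarith+
  have "a / g - b / g < 1" "b / g - a / g < 1" using z1 z2 by linarith+
  then have "(a - b) / g < 1" "(b - a) / g < 1" by (simp_all add: diff_divide_distrib)
  then have "a - b < g" "b - a < g" using g by (simp_all add: divide_less_eq)
  then show ?thesis by linarith
qed

lemma key_step:
  fixes T :: "real \<Rightarrow> real \<Rightarrow> real"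
  assumes tn: "cont_tnorm T" and c: "c \<in> {0..1}"
    and bt: "\<beta> \<le> b0" "b0 \<le> 1" and b: "0 < \<beta>" and a0: "0 \<le> a0" "a0 \<le> 1"
    and close: "\<bar>a0 - b0\<bar> < \<gamma>" and gp: "T b0 c \<le> b0 - \<gamma>" and pos: "T \<beta> c > 0"
    and mono: "b0 \<le> bs" and bs: "bs \<le> 1" and as: "0 \<le> as" "as \<le> 1"
    and ratio: "as < bs \<Longrightarrow> as / T bs c \<ge> a0 / T b0 c"
  shows "T bs c \<le> as"
proof -
  have Q: "T \<beta> c \<le> T b0 c" using T_mono[OF tn, of \<beta> c b0 c] bt b c by auto
  have P: "T b0 c \<le> T bs c" using T_mono[OF tn, of b0 c bs c] bt b c mono bs by auto
  have Qa: "T b0 c \<le> a0" using close gp by linarith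
  show ?thesis
  proof (cases "as < bs")
    case False
    then show ?thesis using T_le_left[OF tn, of bs c] c mono bt b bs by auto
  next
    case True
    have q0: "T b0 c > 0" using Q pos by linarith
    have p0: "T bs c > 0" using P q0 by linarith
    have "1 \<le> a0 / T b0 c" using Qa q0 by simp
    also have "\<dots> \<le> as / T bs c" using ratio[OF True] .
    finally show ?thesis using p0 by (simp add: le_divide_eq)
  qed
qed

lemma diam_le:
  assumes na: "non_archimedean X M T" and x: "x \<in> X" and y: "y \<in> X" and s: "s \<ge> 0"
  shows "fdiam X M s \<le> M x y s"
  unfolding fdiam_def
  apply (rule cInf_lower)
  using x y apply blast
  using na_range[OF na] s by (auto intro!: bdd_belowI[of _ 0])

theorem mainTheorem6:
  fixes T :: "real \<Rightarrow> real \<Rightarrow> real"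
    and X :: "nat \<Rightarrow> 'a set"
    and M :: "nat \<Rightarrow> 'a \<Rightarrow> 'a \<Rightarrow> real \<Rightarrow> real"
    and C :: "real \<Rightarrow> real"
    and Nf :: "real \<Rightarrow> real \<Rightarrow> nat"
  assumes tnorm: "cont_tnorm T"
    and spaces: "\<And>n. non_archimedean (X n) (M n) T"
    and nonempty: "\<And>n. X n \<noteq> {}"
    and compact: "\<And>n. fcompact (X n) (M n)"
    and tn1: "TN1 T"
    and C_mono: "mono_on {0<..} C"
    and C_lcont: "\<And>s. s > 0 \<Longrightarrow> continuous (at_left s) C"
    and C_range: "\<And>s. s > 0 \<Longrightarrow> 0 < C s \<and> C s \<le> 1"
    and C_diam: "\<And>s n. s > 0 \<Longrightarrow> C s \<le> fdiam (X n) (M n) s"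
    and cov: "\<And>t e n. t > 0 \<Longrightarrow> 0 < e \<Longrightarrow> e < 1 \<Longrightarrow> cover_number (X n) (M n) e t \<le> Nf e t"
    and nets: "\<And>t e. t > 0 \<Longrightarrow> 0 < e \<Longrightarrow> e < 1 \<Longrightarrow>
       \<exists>xs :: nat \<Rightarrow> nat \<Rightarrow> 'a.
         (\<forall>n. is_net (X n) (M n) t e (Nf e t) (xs n)) \<and>
         (\<forall>n m s i j. s > t \<longrightarrow> i \<in> {1..Nf e t} \<longrightarrow> j \<in> {1..Nf e t} \<longrightarrow>
            M n (xs n i) (xs n j) s < M m (xs m i) (xs m j) s \<longrightarrow>
            M n (xs n i) (xs n j) s / T (M m (xs m i) (xs m j) s) (1 - e)
              \<ge> M n (xs n i) (xs n j) t / T (M m (xs m i) (xs m j) t) (1 - e))"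
  shows "\<forall>t>0. \<forall>e. 0 < e \<and> e < 1 \<longrightarrow>
           (\<exists>r :: nat \<Rightarrow> nat. strict_mono r \<and>
              (\<forall>j k. M_GH (X (r j)) (M (r j)) (X (r k)) (M (r k)) T t > T (1 - e) (1 - e)))"
proof (intro allI impI)
  fix t e :: real
  assume t: "t > 0" and e: "0 < e \<and> e < 1"
  define \<theta> where "\<theta> = T (1 - e) (1 - e)"
  have e01: "1 - e \<in> {0..1}" using e by auto
  have "\<theta> \<le> 1 - e" unfolding \<theta>_def using T_le_left[OF tnorm e01 e01] .
  then have th1: "\<theta> < 1" using e by linarith
  define t0 where "t0 = t / 2"
  have t0: "t0 > 0" "t0 < t" unfolding t0_def using t by auto
  define \<beta> where "\<beta> = C t0"
  have b: "0 < \<beta>" "\<beta> \<le> 1" unfolding \<beta>_def using C_range[OF t0(1)] by auto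
  obtain c where c: "0 < c" "c < 1" "T c c > \<theta>" "T \<beta> c > 0"
    using choose_c[OF tnorm th1 b] by blast
  have c01: "c \<in> {0..1}" using c by auto
  define e' where "e' = 1 - c"
  have e': "0 < e'" "e' < 1" "1 - e' = c" unfolding e'_def using c by auto
  obtain xs :: "nat \<Rightarrow> nat \<Rightarrow> 'a" where H0: "(\<forall>n. is_net (X n) (M n) t0 e' (Nf e' t0) (xs n)) \<and>
         (\<forall>n m s i j. s > t0 \<longrightarrow> i \<in> {1..Nf e' t0} \<longrightarrow> j \<in> {1..Nf e' t0} \<longrightarrow>
            M n (xs n i) (xs n j) s < M m (xs m i) (xs m j) s \<longrightarrow>
            M n (xs n i) (xs n j) s / T (M m (xs m i) (xs m j) s) (1 - e')
              \<ge> M n (xs n i) (xs n j) t0 / T (M m (xs m i) (xs m j) t0) (1 - e'))"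
    using nets[OF t0(1) e'(1) e'(2)] by (elim exE) (rule that)
  define N where "N = Nf e' t0"
  have H: "(\<forall>n. is_net (X n) (M n) t0 e' N (xs n)) \<and>
         (\<forall>n m s i j. s > t0 \<longrightarrow> i \<in> {1..N} \<longrightarrow> j \<in> {1..N} \<longrightarrow>
            M n (xs n i) (xs n j) s < M m (xs m i) (xs m j) s \<longrightarrow>
            M n (xs n i) (xs n j) s / T (M m (xs m i) (xs m j) s) (1 - e')
              \<ge> M n (xs n i) (xs n j) t0 / T (M m (xs m i) (xs m j) t0) (1 - e'))"
    unfolding N_def by (rule H0)
  note xsnet = conjunct1[OF H] and ratio0 = conjunct2[OF H]
  have ratio: "M n (xs n i) (xs n j) s / T (M m (xs m i) (xs m j) s) c
              \<ge> M n (xs n i) (xs n j) t0 / T (M m (xs m i) (xs m j) t0) c"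
    if "s > t0" "i \<in> {1..N}" "j \<in> {1..N}" "M n (xs n i) (xs n j) s < M m (xs m i) (xs m j) s" for n m s i j
    using ratio0[rule_format, OF that] unfolding e'(3) .
  have xin: "xs n i \<in> X n" if "i \<in> {1..N}" for n i
  proof -
    have "\<forall>i\<in>{1..N}. xs n i \<in> X n" using xsnet[rule_format, of n] unfolding is_net_def by (rule conjunct1)
    then show ?thesis using that by blast
  qed
  have netp: "\<exists>i\<in>{1..N}. M n u (xs n i) t0 > c" if "u \<in> X n" for n u
  proof -
    have "\<forall>x\<in>X n. \<exists>i\<in>{1..N}. M n x (xs n i) t0 > 1 - e'" using xsnet[rule_format, of n] unfolding is_net_def by (rule conjunct2)
    then show ?thesis using that e'(3) by auto
  qed
  have N1: "N \<ge> 1"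
  proof -
    obtain u where "u \<in> X 0" using nonempty[of 0] by auto
    then obtain i where "i \<in> {1..N}" using netp by blast
    then show ?thesis by auto
  qed
  obtain \<gamma> where g: "\<gamma> > 0" and gp: "\<forall>a\<in>{\<beta>..1}. T a c \<le> a - \<gamma>"
    using gap[OF tnorm tn1 b, of c] c by auto
  have rng: "M n (xs n i) (xs n j) s \<in> {0..1}" if "i \<in> {1..N}" "j \<in> {1..N}" "s \<ge> 0" for n i j s
    by (rule na_range[OF spaces xin[OF that(1)] xin[OF that(2)] that(3)])
  define D where "D = {1..N} \<times> {1..N}"
  define B where "B = nat \<lfloor>1 / \<gamma>\<rfloor>"
  define v where "v = (\<lambda>n. restrict (\<lambda>(i, j). nat \<lfloor>M n (xs n i) (xs n j) t0 / \<gamma>\<rfloor>) D)"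
  have vin: "range v \<subseteq> PiE D (\<lambda>_. {0..B})"
  proof
    fix w assume "w \<in> range v"
    then obtain n where n: "w = v n" by auto
    have bnd: "nat \<lfloor>M n (xs n i) (xs n j) t0 / \<gamma>\<rfloor> \<in> {0..B}" if "(i, j) \<in> D" for i j
    proof -
      have ij: "i \<in> {1..N}" "j \<in> {1..N}" using that unfolding D_def by auto
      have "M n (xs n i) (xs n j) t0 \<le> 1" using rng[OF ij, of t0 n] t0 by auto
      then have "M n (xs n i) (xs n j) t0 / \<gamma> \<le> 1 / \<gamma>" using g by (simp add: divide_right_mono)
      then have "\<lfloor>M n (xs n i) (xs n j) t0 / \<gamma>\<rfloor> \<le> \<lfloor>1 / \<gamma>\<rfloor>" by (rule floor_mono)
      then have "nat \<lfloor>M n (xs n i) (xs n j) t0 / \<gamma>\<rfloor> \<le> B" unfolding B_def by (rule nat_mono)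
      then show ?thesis by simp
    qed
    have "\<forall>x\<in>D. (case x of (i, j) \<Rightarrow> nat \<lfloor>M n (xs n i) (xs n j) t0 / \<gamma>\<rfloor>) \<in> {0..B}"
    proof
      fix x assume x: "x \<in> D"
      obtain i j where "x = (i, j)" by (cases x)
      then show "(case x of (i, j) \<Rightarrow> nat \<lfloor>M n (xs n i) (xs n j) t0 / \<gamma>\<rfloor>) \<in> {0..B}"
        using bnd x by simp
    qed
    then show "w \<in> PiE D (\<lambda>_. {0..B})" unfolding n v_def by (simp only: restrict_PiE_iff)
  qed
  have finD: "finite D" unfolding D_def by simp
  have finP: "finite (PiE D (\<lambda>_. {0..B}))" by (rule finite_PiE[OF finD]) simp
  have "finite (range v)" by (rule finite_subset[OF vin finP])
  then have "\<exists>y\<in>range v. infinite (v -` {y})" by (rule inf_img_fin_dom) (rule infinite_UNIV_nat)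
  then obtain y where yinf: "infinite (v -` {y})" by blast
  have "\<exists>r::nat\<Rightarrow>nat. strict_mono r \<and> (\<forall>n. r n \<in> v -` {y})" by (rule infinite_enumerate[OF yinf])
  then obtain r :: "nat \<Rightarrow> nat" where r0: "strict_mono r \<and> (\<forall>n. r n \<in> v -` {y})" ..
  have r: "strict_mono r" "\<And>n. v (r n) = y" using r0 by auto
  have vr: "v (r j) = v (r k)" for j k using r(2)[of j] r(2)[of k] by simp
  have lowb: "\<beta> \<le> M n (xs n i) (xs n l) t0" if i: "i \<in> {1..N}" and l: "l \<in> {1..N}" for n i l
  proof -
    have "C t0 \<le> fdiam (X n) (M n) t0" using C_diam[OF t0(1)] .
    moreover have "fdiam (X n) (M n) t0 \<le> M n (xs n i) (xs n l) t0"
      using diam_le[OF spaces xin[OF i] xin[OF l], of t0] t0 by auto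
    ultimately show ?thesis unfolding \<beta>_def by linarith
  qed
  have keyg: "T (M m (xs m i) (xs m l) s) c \<le> M n (xs n i) (xs n l) s"
    if cl: "\<And>i l. i \<in> {1..N} \<Longrightarrow> l \<in> {1..N} \<Longrightarrow> \<bar>M n (xs n i) (xs n l) t0 - M m (xs m i) (xs m l) t0\<bar> < \<gamma>"
      and s: "s > t0" and i: "i \<in> {1..N}" and l: "l \<in> {1..N}" for n m s i l
  proof (rule key_step[OF tnorm c01 lowb[OF i l] _ b(1)])
    show "M m (xs m i) (xs m l) t0 \<le> 1" using rng[OF i l, of t0] t0 by auto
    show "0 \<le> M n (xs n i) (xs n l) t0" "M n (xs n i) (xs n l) t0 \<le> 1" using rng[OF i l, of t0] t0 by auto
    show "\<bar>M n (xs n i) (xs n l) t0 - M m (xs m i) (xs m l) t0\<bar> < \<gamma>" using cl[OF i l] .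
    show "T (M m (xs m i) (xs m l) t0) c \<le> M m (xs m i) (xs m l) t0 - \<gamma>"
      using gp lowb[OF i l, of m] rng[OF i l, of t0 m] t0 by auto
    show "T \<beta> c > 0" using c by auto
    show "M m (xs m i) (xs m l) t0 \<le> M m (xs m i) (xs m l) s"
      using na_mono[OF spaces xin[OF i] xin[OF l]] s t0 by auto
    show "M m (xs m i) (xs m l) s \<le> 1" "0 \<le> M n (xs n i) (xs n l) s" "M n (xs n i) (xs n l) s \<le> 1"
      using rng[OF i l, of s] s t0 by auto
    show "M n (xs n i) (xs n l) s < M m (xs m i) (xs m l) s \<Longrightarrow>
        M n (xs n i) (xs n l) t0 / T (M m (xs m i) (xs m l) t0) c \<le> M n (xs n i) (xs n l) s / T (M m (xs m i) (xs m l) s) c"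
      using ratio[OF s i l] by blast
  qed
  show "\<exists>r :: nat \<Rightarrow> nat. strict_mono r \<and>
              (\<forall>j k. M_GH (X (r j)) (M (r j)) (X (r k)) (M (r k)) T t > T (1 - e) (1 - e))"
  proof (intro exI[of _ r] conjI allI)
    show "strict_mono r" using r(1) .
    fix j k
    define n where "n = r j"
    define m where "m = r k"
    have vnm: "v n = v m" unfolding n_def m_def using vr .
    have cl: "\<bar>M n (xs n i) (xs n l) t0 - M m (xs m i) (xs m l) t0\<bar> < \<gamma>"
      if i: "i \<in> {1..N}" and l: "l \<in> {1..N}" for i l
    proof -
      have "(i, l) \<in> D" using i l unfolding D_def by auto
      then have "nat \<lfloor>M n (xs n i) (xs n l) t0 / \<gamma>\<rfloor> = nat \<lfloor>M m (xs m i) (xs m l) t0 / \<gamma>\<rfloor>"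
        using fun_cong[OF vnm, of "(i, l)"] unfolding v_def by auto
      then show ?thesis using floor_close[OF g] rng[OF i l, of t0 n] rng[OF i l, of t0 m] t0 by auto
    qed
    have cl': "\<bar>M m (xs m i) (xs m l) t0 - M n (xs n i) (xs n l) t0\<bar> < \<gamma>"
      if i: "i \<in> {1..N}" and l: "l \<in> {1..N}" for i l
      using cl[OF i l] by (simp add: abs_minus_commute)
    have ctx: "glue_ctx T (X n) (M n) (X m) (M m) (xs n) (xs m) N c t0"
    proof (rule glue_ctx.intro)
      show "non_archimedean (X n) (M n) T" "non_archimedean (X m) (M m) T" using spaces by auto
      show "\<And>i. i \<in> {1..N} \<Longrightarrow> xs n i \<in> X n" "\<And>i. i \<in> {1..N} \<Longrightarrow> xs m i \<in> X m" using xin by auto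
      show "N \<ge> 1" "0 \<le> c" "c \<le> 1" "t0 > 0" using N1 c t0 by auto
      show "\<And>s i j. s > t0 \<Longrightarrow> i \<in> {1..N} \<Longrightarrow> j \<in> {1..N} \<Longrightarrow>
        T (M m (xs m i) (xs m j) s) c \<le> M n (xs n i) (xs n j) s"
        using keyg[OF cl] by blast
      show "\<And>s i j. s > t0 \<Longrightarrow> i \<in> {1..N} \<Longrightarrow> j \<in> {1..N} \<Longrightarrow>
        T (M n (xs n i) (xs n j) s) c \<le> M m (xs m i) (xs m j) s"
        using keyg[OF cl'] by blast
    qed
    have "T c c \<le> hausdorff_fuzzy (glue T (M n) (M m) (xs n) (xs m) N c t0) (Inl ` X n) (Inr ` X m) t"
      by (rule glue_ctx.glue_haus[OF ctx netp netp t0(2) nonempty nonempty])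
    then have "T c c \<le> M_GH (X n) (M n) (X m) (M m) T t"
      using MGH_ge[OF glue_ctx.glue_adm[OF ctx] nonempty nonempty] t by auto
    then show "M_GH (X (r j)) (M (r j)) (X (r k)) (M (r k)) T t > T (1 - e) (1 - e)"
      using c(3) unfolding n_def m_def \<theta>_def by linarith
  qed
qed


end
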